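(* Let $m\ge 2$. The Lucas numbers are complete mod $m$ if and only if $m\in\{2,4,6,7,14\}$ or $m=3^j$ for some integer $j\ge1$.
   Context: The Lucas numbers are the sequence $L_1=1$, $L_2=3$, $L_{n+1}=L_{n-1}+L_n$ (so $1,3,4,7,11,18,\dots$). A sequence is complete mod $m$ if every residue class modulo $m$ contains some term of the sequence, and defective mod $m$ otherwise. *)

theory Defs
  imports Main "HOL-Number_Theory.Cong"
begin

text \<open>The value at index 0 is the natural extension L 0 = 2, but it is never used
  by the completeness notion below, which only ranges over indices n \<ge> 1.\<close>
fun lucas :: "nat \<Rightarrow> int" where
  "lucas 0 = 2"
| "lucas (Suc 0) = 1"
| "lucas (Suc (Suc n)) = lucas n + lucas (Suc n)"

definition complete_mod :: "(nat \<Rightarrow> int) \<Rightarrow> int \<Rightarrow> bool" where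
  "complete_mod a m \<longleftrightarrow> (\<forall>r::int. \<exists>n\<ge>1. [a n = r] (mod m))"

end

theory Submission
  imports Defs "HOL-Number_Theory.Number_Theory"
begin


fun fibi :: "nat \<Rightarrow> int" where
 "fibi 0 = 0" | "fibi (Suc 0) = 1" | "fibi (Suc (Suc n)) = fibi n + fibi (Suc n)"

lemma lucas_fibi: "lucas n = 2 * fibi (Suc n) - fibi n"
  by (induction n rule: fibi.induct) auto

lemma cassini: "fibi (Suc n)^2 - fibi (Suc n) * fibi n - fibi n^2 = (-1)^n"
proof (induction n)
  case 0 then show ?case by simp
next
  case (Suc n) then show ?case by (simp add: power2_eq_square algebra_simps)
qed

lemma lucas_sq: "lucas n^2 - 5*fibi n^2 = 4*(-1)^n"
  using cassini[of n] unfolding lucas_fibi by (simp add: power2_eq_square algebra_simps)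

lemma addf: "2*lucas (n+m) = lucas n * lucas m + 5*fibi n*fibi m \<and> 2*fibi(n+m) = fibi n * lucas m + lucas n * fibi m"
proof (induction n rule: fibi.induct)
  case 1 then show ?case by simp
next
  case 2 then show ?case by (simp add: lucas_fibi algebra_simps)
next
  case (3 n) then show ?case by (simp add: algebra_simps)
qed



fun st :: "int \<Rightarrow> nat \<Rightarrow> int \<Rightarrow> int \<Rightarrow> int \<times> int" where
 "st d 0 a b = (a,b)" | "st d (Suc k) a b = st d k b ((a+b) mod d)"

fun okl :: "int \<Rightarrow> int \<Rightarrow> nat \<Rightarrow> int \<Rightarrow> int \<Rightarrow> bool" where
 "okl d r 0 a b = True" | "okl d r (Suc k) a b = (a \<noteq> r \<and> okl d r k b ((a+b) mod d))"

fun vals :: "int \<Rightarrow> nat \<Rightarrow> int \<Rightarrow> int \<Rightarrow> int list" where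
 "vals d 0 a b = []" | "vals d (Suc k) a b = a # vals d k b ((a+b) mod d)"

lemma st_lucas: "st d k (lucas n mod d) (lucas (Suc n) mod d) = (lucas (n+k) mod d, lucas (Suc (n+k)) mod d)"
proof (induction k arbitrary: n)
  case 0 then show ?case by simp
next
  case (Suc k)
  have "(lucas n mod d + lucas (Suc n) mod d) mod d = lucas (Suc (Suc n)) mod d"
    by (simp add: mod_add_eq)
  then show ?case using Suc[of "Suc n"] by simp
qed

lemma st_add: "st d (k+l) a b = (case st d k a b of (a',b') \<Rightarrow> st d l a' b')"
  by (induction k arbitrary: a b) auto

lemma okl_st: "okl d r k a b \<Longrightarrow> i < k \<Longrightarrow> fst (st d i a b) \<noteq> r"
proof (induction k arbitrary: i a b)
  case 0 then show ?case by simp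
next
  case (Suc k) then show ?case by (cases i) auto
qed

lemma vals_st: "x \<in> set (vals d k a b) \<Longrightarrow> \<exists>i<k. fst (st d i a b) = x"
proof (induction k arbitrary: a b)
  case 0 then show ?case by simp
next
  case (Suc k)
  show ?case
  proof (cases "x = a")
    case True then show ?thesis by (intro exI[of _ 0]) auto
  next
    case False
    then obtain i where "i<k" "fst (st d i b ((a+b) mod d)) = x" using Suc by auto
    then show ?thesis by (intro exI[of _ "Suc i"]) auto
  qed
qed

lemma lucas_st: "lucas (Suc i) mod d = fst (st d i (1 mod d) (3 mod d))"
  using st_lucas[of d i 1] by simp

lemma st_period:
  assumes "st d P a b = (a, b)"
  shows "st d (q*P + i) a b = st d i a b"
proof (induction q)
  case 0 then show ?case by simp
next
  case (Suc q)
  have "st d (Suc q * P + i) a b = st d (P + (q*P+i)) a b" by (simp add: algebra_simps)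
  also have "\<dots> = st d (q*P+i) a b" using assms by (simp add: st_add)
  finally show ?case using Suc by simp
qed

lemma defective_check:
  assumes "d > 0" "0 \<le> r" "r < d" "P > 0" "okl d r P (1 mod d) (3 mod d)"
    "st d P (1 mod d) (3 mod d) = (1 mod d, 3 mod d)"
  shows "\<not> complete_mod lucas d"
proof
  assume "complete_mod lucas d"
  then obtain n where n: "n \<ge> 1" "[lucas n = r] (mod d)" unfolding complete_mod_def by blast
  then obtain i where i: "n = Suc i" by (cases n) auto
  have "lucas n mod d = r" using n(2) assms(2,3) by (simp add: cong_def)
  also have "lucas n mod d = fst (st d i (1 mod d) (3 mod d))" using lucas_st i by simp
  also have "\<dots> = fst (st d (i mod P) (1 mod d) (3 mod d))"
    using st_period[OF assms(6), of "i div P" "i mod P"] by simp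
  finally show False using okl_st[OF assms(5)] assms(4) by simp
qed

lemma complete_check:
  assumes "d > 0" "set [0..d-1] \<subseteq> set (vals d P (1 mod d) (3 mod d))"
  shows "complete_mod lucas d"
  unfolding complete_mod_def
proof
  fix r :: int
  have "r mod d \<in> set [0..d-1]" using assms(1) by auto
  then obtain i where "fst (st d i (1 mod d) (3 mod d)) = r mod d" using assms(2) vals_st by blast
  then have "lucas (Suc i) mod d = r mod d" using lucas_st by simp
  then show "\<exists>n\<ge>1. [lucas n = r] (mod d)" by (intro exI[of _ "Suc i"]) (simp add: cong_def)
qed



lemma triple:
  assumes "even m"
  shows "fibi (3*m) = fibi m * (5*fibi m^2 + 3) \<and> lucas (3*m) = lucas m^3 - 3*lucas m"
proof -
  define F L F2 L2 F3 L3 where "F = fibi m" "L = lucas m" "F2 = fibi (m+m)" "L2 = lucas (m+m)"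
    "F3 = fibi (m+m+m)" "L3 = lucas (m+m+m)"
  have e1: "2*L2 = L*L + 5*F*F" "2*F2 = F*L + L*F" using addf[of m m] unfolding F_L_F2_L2_F3_L3_def by auto
  have e2: "2*L3 = L2*L + 5*F2*F" "2*F3 = F2*L + L2*F" using addf[of "m+m" m] unfolding F_L_F2_L2_F3_L3_def by auto
  have e3: "L^2 - 5*F^2 = 4" using lucas_sq[of m] assms unfolding F_L_F2_L2_F3_L3_def by simp
  have L2: "L^2 = 5*F^2 + 4" using e3 by simp
  have "4*F3 = 2*F2*L + (2*L2)*F" using e2 by simp
  also have "\<dots> = (F*L+L*F)*L + (L*L+5*F*F)*F" using e1 by simp
  also have "\<dots> = F*(3*L^2 + 5*F^2)" by (simp add: algebra_simps power2_eq_square)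
  also have "\<dots> = 4*(F*(5*F^2+3))" unfolding L2 by (simp add: algebra_simps)
  finally have "4*F3 = 4*(F*(5*F^2+3))" .
  then have r1: "F3 = F*(5*F^2+3)" by simp
  have "4*L3 = (2*L2)*L + 5*(2*F2)*F" using e2 by simp
  also have "\<dots> = (L*L+5*F*F)*L + 5*(F*L+L*F)*F" using e1 by simp
  also have "\<dots> = L^3 + 3*L*(5*F^2)" by (simp add: algebra_simps power2_eq_square power3_eq_cube)
  also have "\<dots> = 4*(L^3 - 3*L)" using L2 by (simp add: algebra_simps power2_eq_square power3_eq_cube)
  finally have "4*L3 = 4*(L^3 - 3*L)" .
  then have r2: "L3 = L^3 - 3*L" by simp
  have m3: "3*m = m+m+m" by simp
  show ?thesis using r1 r2 unfolding F_L_F2_L2_F3_L3_def m3 by simp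
qed

lemma fib8: "fibi 8 = 21" and luc8: "lucas 8 = 47"
  by (simp_all add: eval_nat_numeral)

lemma Tfacts:
  assumes "j \<ge> 1"
  shows "(\<exists>f. fibi (8*3^(j-1)) = 3^j*f \<and> \<not> 3 dvd f) \<and> [lucas (8*3^(j-1)) = 2] (mod 3^(j+1))"
  using assms
proof (induction j rule: dec_induct)
  case base
  show ?case by (auto simp: fib8 luc8 cong_def intro!: exI[of _ 7])
next
  case (step j)
  define m where "m = (8::nat)*3^(j-1)"
  have m3: "8*3^(Suc j - 1) = 3*m" using step(1) unfolding m_def
    by (cases j) auto
  have ev: "even m" unfolding m_def by simp
  from step(3) obtain f where f: "fibi m = 3^j*f" "\<not> 3 dvd f" unfolding m_def by blast
  from step(3) have "(3::int)^(j+1) dvd lucas m - 2" unfolding m_def by (simp add: cong_iff_dvd_diff dvd_diff_commute)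
  then obtain g where g: "lucas m = 2 + 3^(j+1)*g" by (metis add_diff_cancel_left' diff_add_cancel dvd_def)
  obtain j' where j': "j = Suc j'" using step(1) by (cases j) auto
  define X :: int where "X = 3^j'"
  have X: "(3::int)^j = 3*X" "(3::int)^(j+1) = 9*X" "(3::int)^(2*j-1) = 3*X^2" using j' unfolding X_def
    by (simp_all add: power_add power_mult power2_eq_square mult.commute)
  have F3: "fibi (3*m) = 3^(j+1) * (f*(5*3^(2*j-1)*f^2 + 1))"
    using triple[OF ev, THEN conjunct1] f(1) unfolding X by (simp add: algebra_simps power2_eq_square)
  have nd: "\<not> 3 dvd f*(5*3^(2*j-1)*f^2 + 1)"
  proof
    assume "3 dvd f*(5*3^(2*j-1)*f^2 + 1)"
    then have "3 dvd f \<or> 3 dvd (5*3^(2*j-1)*f^2 + 1)" using prime_dvd_mult_iff[of "3::int"] by auto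
    moreover have a: "3 dvd (5*3^(2*j-1)*f^2 :: int)" using j' by (simp add: power_add)
    moreover have "\<not> 3 dvd (5*3^(2*j-1)*f^2 + 1 :: int)"
    proof
      assume "3 dvd (5*3^(2*j-1)*f^2 + 1 :: int)"
      then have "(3::int) dvd 1" using a dvd_add_right_iff by blast
      then show False by simp
    qed
    ultimately show False using f(2) by blast
  qed
  have L3: "lucas (3*m) - 2 = 3^(j+3) * (g*(1+3^j*g)^2)"
    using triple[OF ev] g by (simp add: power2_eq_square power3_eq_cube algebra_simps power_add)
  have "(3::int)^(j+2) dvd lucas (3*m) - 2" unfolding L3
  proof -
    have "(3::int)^(j+3) * (g*(1+3^j*g)^2) = 3^(j+2) * (3*(g*(1+3^j*g)^2))" by (simp add: power_add)
    then show "(3::int)^(j+2) dvd 3^(j+3) * (g*(1+3^j*g)^2)" by (metis dvd_triv_left)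
  qed
  then show ?case unfolding m3 using F3 nd
    by (auto simp: cong_iff_dvd_diff dvd_diff_commute)
qed



lemma fib4: "fibi (k+4) = 3*fibi (k+1) + 2*fibi k"
  by (simp add: eval_nat_numeral)

lemma fib_dvd3: "3 dvd fibi k \<longleftrightarrow> 4 dvd k"
proof (induction k rule: less_induct)
  case (less k)
  show ?case
  proof (cases "k < 4")
    case True
    then have "k = 0 \<or> k = 1 \<or> k = 2 \<or> k = 3" by auto
    moreover have "fibi 0 = 0" "fibi 1 = 1" "fibi 2 = 1" "fibi 3 = 2" by (simp_all add: eval_nat_numeral)
    ultimately show ?thesis by (elim disjE) simp_all
  next
    case False
    then obtain k' where k: "k = k'+4" by (metis add.commute le_Suc_ex not_less)
    have "3 dvd fibi k \<longleftrightarrow> 3 dvd 2*fibi k'" unfolding k fib4 by (simp add: dvd_add_right_iff)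
    also have "\<dots> \<longleftrightarrow> 3 dvd fibi k'" by presburger
    also have "\<dots> \<longleftrightarrow> 4 dvd k'" using less[of k'] k by simp
    also have "\<dots> \<longleftrightarrow> 4 dvd k" unfolding k by presburger
    finally show ?thesis .
  qed
qed

lemma step3:
  assumes "j \<ge> 1" "fibi T = 3^j*f" "lucas T = 2 + 3^(j+1)*g"
  shows "\<exists>h. lucas (k+T) = lucas k + 3^j*h \<and> [h = f*fibi k] (mod 3) \<and> [fibi (k+T) = fibi k] (mod 3)"
proof -
  have a: "2*lucas (k+T) = lucas k * lucas T + 5*fibi k*fibi T"
   and b: "2*fibi (k+T) = fibi k * lucas T + lucas k * fibi T" using addf[of k T] by auto
  define D where "D = 3*g*lucas k + 5*f*fibi k"
  have "2*(lucas (k+T) - lucas k) = 3^j * D" using a assms(2,3) unfolding D_def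
    by (simp add: algebra_simps)
  then have "(3::int)^j dvd 2*(lucas (k+T) - lucas k)" by (metis dvd_triv_left)
  moreover have "coprime ((3::int)^j) 2" by simp
  ultimately have "(3::int)^j dvd (lucas (k+T) - lucas k)" using coprime_dvd_mult_right_iff by blast
  then obtain h where h: "lucas (k+T) - lucas k = 3^j*h" by (auto simp: dvd_def)
  have "3^j*(2*h) = 3^j * D" using \<open>2*(lucas (k+T) - lucas k) = 3^j * D\<close> h by (simp add: algebra_simps)
  then have hD: "2*h = D" by simp
  obtain A B where AB: "A = g*lucas k" "B = f*fibi k" by blast
  have "2*h = 3*A + 5*B" using hD unfolding D_def AB by (simp add: mult.assoc)
  then have "h - B = 3*(2*A + 3*B - h)" by (simp add: algebra_simps)
  then have e: "h - f*fibi k = 3*(2*g*lucas k + 3*f*fibi k - h)" unfolding AB by (simp add: mult.assoc)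
  have c1: "[h = f*fibi k] (mod 3)" unfolding cong_iff_dvd_diff by (subst e) simp
  obtain j' where j': "j = Suc j'" using assms(1) by (cases j) auto
  have "2*(fibi (k+T) - fibi k) = 3*(3^j'*(3*g*fibi k + f*lucas k))" using b assms(2,3) j'
    by (simp add: algebra_simps)
  then have "(3::int) dvd 2*(fibi (k+T) - fibi k)" by (metis dvd_triv_left)
  then have "(3::int) dvd (fibi (k+T) - fibi k)" by presburger
  then have c2: "[fibi (k+T) = fibi k] (mod 3)" by (simp add: cong_iff_dvd_diff)
  show ?thesis using h c1 c2 by (intro exI[of _ h]) (simp add: algebra_simps)
qed

lemma multi3:
  assumes "j \<ge> 1" "fibi T = 3^j*f" "lucas T = 2 + 3^(j+1)*g"
  shows "\<exists>h. lucas (n+k*T) = lucas n + 3^j*h \<and> [h = int k*(f*fibi n)] (mod 3) \<and> [fibi (n+k*T) = fibi n] (mod 3)"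
proof (induction k)
  case 0 then show ?case by (intro exI[of _ 0]) simp
next
  case (Suc k)
  then obtain h where h: "lucas (n+k*T) = lucas n + 3^j*h" "[h = int k*(f*fibi n)] (mod 3)"
    "[fibi (n+k*T) = fibi n] (mod 3)" by blast
  obtain h' where h': "lucas (n+k*T+T) = lucas (n+k*T) + 3^j*h'" "[h' = f*fibi (n+k*T)] (mod 3)"
    "[fibi (n+k*T+T) = fibi (n+k*T)] (mod 3)" using step3[OF assms, of "n+k*T"] by blast
  have e: "n + Suc k * T = n+k*T+T" by simp
  have "[h' = f*fibi n] (mod 3)" using h'(2) h(3) by (metis cong_scalar_left cong_trans)
  then have "[h + h' = int k*(f*fibi n) + f*fibi n] (mod 3)" using h(2) cong_add by blast
  then have "[h + h' = int (Suc k)*(f*fibi n)] (mod 3)" by (simp add: algebra_simps)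
  moreover have "lucas (n + Suc k * T) = lucas n + 3^j*(h+h')" unfolding e h'(1) h(1) by (simp add: algebra_simps)
  moreover have "[fibi (n + Suc k*T) = fibi n] (mod 3)" unfolding e using h'(3) h(3) cong_trans by blast
  ultimately show ?case by blast
qed

lemma lift3:
  assumes "j \<ge> 1" "\<forall>r. \<exists>n. \<not> 4 dvd n \<and> [lucas n = r] (mod 3^j)"
  shows "\<forall>r. \<exists>n. \<not> 4 dvd n \<and> [lucas n = r] (mod 3^(j+1))"
proof
  fix r :: int
  define T where "T = (8::nat)*3^(j-1)"
  obtain f where f: "fibi T = 3^j*f" "\<not> 3 dvd f" using Tfacts[OF assms(1)] unfolding T_def by blast
  have "(3::int)^(j+1) dvd lucas T - 2" using Tfacts[OF assms(1)] unfolding T_def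
    by (simp add: cong_iff_dvd_diff dvd_diff_commute)
  then obtain g where g: "lucas T = 2 + 3^(j+1)*g" by (metis add_diff_cancel_left' diff_add_cancel dvd_def)
  obtain n where n: "\<not> 4 dvd n" "[lucas n = r] (mod 3^j)" using assms(2) by blast
  have "(3::int)^j dvd r - lucas n" using n(2) by (simp add: cong_iff_dvd_diff dvd_diff_commute)
  then obtain q where q: "r - lucas n = 3^j*q" by (auto simp: dvd_def)
  define c where "c = f*fibi n"
  have nc: "\<not> 3 dvd c" unfolding c_def using f(2) n(1) fib_dvd3[of n] prime_dvd_mult_iff[of "3::int"] by auto
  define k where "k = nat ((q*c) mod 3)"
  have "c mod 3 = 1 \<or> c mod 3 = 2" using nc by presburger
  then have "(c mod 3)*(c mod 3) mod 3 = 1" by auto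
  then have "[c*c = 1] (mod 3)" by (simp add: cong_def mod_mult_eq)
  have kc: "[int k * c = q] (mod 3)"
  proof -
    have "int k = (q*c) mod 3" unfolding k_def by simp
    then have "[int k * c = q*c*c] (mod 3)" by (simp add: cong_def mod_mult_left_eq)
    also have "[q*c*c = q*1] (mod 3)" using \<open>[c*c = 1] (mod 3)\<close>
      by (metis cong_scalar_left mult.assoc)
    finally show ?thesis by simp
  qed
  obtain h where h: "lucas (n+k*T) = lucas n + 3^j*h" "[h = int k*c] (mod 3)"
    using multi3[OF assms(1) f(1) g, of n k] unfolding c_def by blast
  have "[h = q] (mod 3)" using h(2) kc cong_trans by blast
  then obtain w where w: "h - q = 3*w" by (auto simp: cong_iff_dvd_diff dvd_def)
  have "lucas (n+k*T) - r = 3^(j+1)*w" using h(1) q w by (simp add: algebra_simps)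
  then have "[lucas (n+k*T) = r] (mod 3^(j+1))" by (simp add: cong_iff_dvd_diff)
  moreover have "\<not> 4 dvd n + k*T"
  proof -
    have "4 dvd k*T" unfolding T_def by simp
    then show ?thesis using n(1) dvd_add_left_iff by blast
  qed
  ultimately show "\<exists>n. \<not> 4 dvd n \<and> [lucas n = r] (mod 3^(j+1))" by blast
qed

lemma complete3:
  assumes "j \<ge> 1"
  shows "\<forall>r. \<exists>n. \<not> 4 dvd n \<and> [lucas n = r] (mod 3^j)"
  using assms
proof (induction j rule: dec_induct)
  case base
  show ?case
  proof
    fix r :: int
    have "r mod 3 = 0 \<or> r mod 3 = 1 \<or> r mod 3 = 2" by presburger
    moreover have "lucas 2 = 3" "lucas 1 = 1" "lucas 5 = 11" by (simp_all add: eval_nat_numeral)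
    ultimately show "\<exists>n. \<not> 4 dvd n \<and> [lucas n = r] (mod 3^1)"
      by (auto simp: cong_def intro: exI[of _ "2::nat"] exI[of _ "1::nat"] exI[of _ "5::nat"])
  qed
next
  case (step j)
  then show ?case using lift3 by simp
qed



lemma prime357: "prime (3::nat)" "prime (5::nat)" "prime (7::nat)"
  by (simp_all add: prime_nat_iff' atLeastLessThan_nat_numeral)

lemma idvd: "int p dvd numeral k \<Longrightarrow> p dvd numeral k"
  by (metis int_dvd_int_iff of_nat_numeral)

lemma small_ndvd:
  assumes "prime (p::nat)" "p \<notin> {2,3,5,7}"
  shows "\<not> int p dvd 2" "\<not> int p dvd 3" "\<not> int p dvd 4" "\<not> int p dvd 5" "\<not> int p dvd 7"
    "\<not> int p dvd 9" "\<not> int p dvd 25" "\<not> int p dvd 28" "\<not> int p dvd 100"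
proof -
  have P: "p dvd q \<Longrightarrow> prime q \<Longrightarrow> p = q" for q using primes_dvd_imp_eq assms(1) by blast
  have M: "p dvd a*b \<Longrightarrow> p dvd a \<or> p dvd b" for a b using prime_dvd_mult_iff assms(1) by blast
  note pr = prime357 two_is_prime_nat
  show "\<not> int p dvd 2" using P[of 2] assms(2) pr idvd by fastforce
  show "\<not> int p dvd 3" using P[of 3] assms(2) pr idvd by fastforce
  show "\<not> int p dvd 5" using P[of 5] assms(2) pr idvd by fastforce
  show "\<not> int p dvd 7" using P[of 7] assms(2) pr idvd by fastforce
  show "\<not> int p dvd 4" using P[of 2] M[of 2 2] assms(2) pr idvd by fastforce
  show "\<not> int p dvd 9" using P[of 3] M[of 3 3] assms(2) pr idvd by fastforce
  show "\<not> int p dvd 25" using P[of 5] M[of 5 5] assms(2) pr idvd by fastforce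
  show "\<not> int p dvd 28" using P[of 2] P[of 7] M[of 4 7] M[of 2 2] assms(2) pr idvd by fastforce
  show "\<not> int p dvd 100" using P[of 2] P[of 5] M[of 4 25] M[of 2 2] M[of 5 5] assms(2) pr idvd by fastforce
qed

lemma fermat_int:
  assumes "prime (p::nat)" "p > 2" "\<not> int p dvd x"
  shows "[x^(p-1) = 1] (mod int p)"
proof -
  have pi: "prime (int p)" using assms(1) by simp
  have "\<not> int p dvd x^2" using pi assms(3) prime_dvd_power_iff by (metis zero_less_numeral)
  then have "\<not> [x^2 = 0] (mod int p)" by (simp add: cong_0_iff)
  moreover have "QuadRes (int p) (x^2)" unfolding QuadRes_def by (auto intro: cong_refl)
  ultimately have "Legendre (x^2) (int p) = 1" unfolding Legendre_def by simp
  moreover have "(x^2)^((p-1) div 2) = x^(p-1)"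
  proof -
    have "odd p" using assms(1,2) prime_odd_nat by blast
    then have "2*((p-1) div 2) = p - 1" by presburger
    then show ?thesis by (metis power_mult)
  qed
  ultimately show ?thesis using euler_criterion[OF assms(1,2), of "x^2"] by (simp add: cong_sym_eq)
qed

lemma two_inv:
  assumes "odd (p::nat)"
  shows "[2*((int p+1) div 2) = 1] (mod int p)"
proof -
  have "2*((int p+1) div 2) = int p + 1" using assms by presburger
  then show ?thesis by (simp add: cong_def)
qed

lemma cancel_cong:
  assumes "prime (p::nat)" "\<not> int p dvd c" "[c*x = c*y] (mod int p)"
  shows "[x = y] (mod int p)"
proof -
  have "coprime c (int p)" using assms(1,2) prime_imp_coprime[of "int p" c]
    by (simp add: coprime_commute)
  then show ?thesis using assms(3) cong_mult_lcancel by blast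
qed

lemma sq_nz:
  assumes "prime (p::nat)" "[c*y^2 = d] (mod int p)" "\<not> int p dvd d"
  shows "\<not> int p dvd y"
proof
  assume "int p dvd y"
  then have "int p dvd c*y^2" by (simp add: power2_eq_square)
  then show False using assms(2,3) by (metis cong_dvd_iff)
qed

lemma missing_nonres:
  assumes "prime (p::nat)" "\<not> QuadRes (int p) 5"
    "[t^2 - 4 = y^2] (mod int p)" "[t^2 + 4 = z^2] (mod int p)"
    "\<not> int p dvd y" "\<not> int p dvd z"
  shows "\<not> complete_mod lucas (int p)"
proof
  assume "complete_mod lucas (int p)"
  then obtain n where n: "[lucas n = t] (mod int p)" unfolding complete_mod_def by blast
  have pi: "prime (int p)" using assms(1) by simp
  obtain c where c: "[5*fibi n^2 = c^2] (mod int p)" "\<not> int p dvd c"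
  proof (cases "even n")
    case True
    then have "5*fibi n^2 = lucas n^2 - 4" using lucas_sq[of n] by simp
    moreover have "[lucas n^2 - 4 = t^2 - 4] (mod int p)" using n by (intro cong_diff cong_pow) auto
    ultimately have "[5*fibi n^2 = y^2] (mod int p)" using assms(3) cong_trans by metis
    then show ?thesis using that assms(5) by blast
  next
    case False
    then have "5*fibi n^2 = lucas n^2 + 4" using lucas_sq[of n] by simp
    moreover have "[lucas n^2 + 4 = t^2 + 4] (mod int p)" using n by (intro cong_add cong_pow) auto
    ultimately have "[5*fibi n^2 = z^2] (mod int p)" using assms(4) cong_trans by metis
    then show ?thesis using that assms(6) by blast
  qed
  have "\<not> int p dvd c^2" using c(2) pi prime_dvd_power_iff by (metis zero_less_numeral)
  then have "\<not> int p dvd fibi n"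
    using c(1) by (metis cong_dvd_iff dvd_mult power2_eq_square)
  then have "coprime (int p) (fibi n)" using prime_imp_coprime[OF pi] by blast
  then have "coprime (fibi n) (int p)" by (simp add: coprime_commute)
  then obtain e where e: "[fibi n * e = 1] (mod int p)" using cong_solve_coprime_int by blast
  have "[5*(fibi n*e)^2 = 5*1^2] (mod int p)" using e by (intro cong_mult cong_pow) auto
  moreover have "[5*(fibi n*e)^2 = (c*e)^2] (mod int p)"
  proof -
    have "[5*fibi n^2 * e^2 = c^2*e^2] (mod int p)" using c(1) by (intro cong_mult) auto
    then show ?thesis by (simp add: power_mult_distrib mult.assoc)
  qed
  ultimately have "[(c*e)^2 = 5] (mod int p)" by (metis cong_sym cong_trans mult.right_neutral power_one)
  then show False using assms(2) unfolding QuadRes_def by blast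
qed



lemma nonres_defective:
  assumes p: "prime (p::nat)" "p \<notin> {2,3,5,7}" and n5: "\<not> QuadRes (int p) 5"
  shows "\<not> complete_mod lucas (int p)"
proof -
  note nd = small_ndvd[OF p]
  have p2: "p > 2" using p prime_ge_2_nat[of p] by auto
  have odd: "odd p" using p p2 prime_odd_nat by blast
  define h where "h = (int p + 1) div 2"
  have H: "[(2*h)^2 = 1] (mod int p)" using two_inv[OF odd] unfolding h_def
    using cong_pow[of _ 1 _ 2] by fastforce
  show ?thesis
  proof (cases "QuadRes (int p) (-1)")
    case True
    then obtain i where i: "[i^2 = -1] (mod int p)" unfolding QuadRes_def by blast
    have y: "[(0::int)^2 - 4 = (2*i)^2] (mod int p)"
    proof -
      have "[4*i^2 = 4*(-1)] (mod int p)" using i by (intro cong_mult) auto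
      then show ?thesis by (simp add: power_mult_distrib cong_sym_eq)
    qed
    have "[1*(2*i)^2 = -4] (mod int p)" using y by (simp add: cong_sym_eq)
    moreover have "\<not> int p dvd -4" using nd by simp
    ultimately have "\<not> int p dvd 2*i" using sq_nz[OF p(1)] by blast
    moreover have "[(0::int)^2 + 4 = 2^2] (mod int p)" by simp
    ultimately show ?thesis using missing_nonres[OF p(1) n5 y] nd by blast
  next
    case nm1: False
    show ?thesis
    proof (cases "QuadRes (int p) (-7)")
      case True
      then obtain w where w: "[w^2 = -7] (mod int p)" unfolding QuadRes_def by blast
      have e1: "4*((3*h)^2 - 4) = 9*(2*h)^2 - 16" by (simp add: algebra_simps power2_eq_square)
      have "[9*(2*h)^2 - 16 = 9*1 - 16] (mod int p)" using H by (intro cong_diff cong_mult) auto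
      then have a1: "[4*((3*h)^2 - 4) = -7] (mod int p)" unfolding e1 by simp
      have "[w^2*(2*h)^2 = (-7)*1] (mod int p)" using H w by (intro cong_mult) auto
      then have a2: "[4*(w*h)^2 = -7] (mod int p)" by (simp add: power_mult_distrib algebra_simps)
      have y: "[(3*h)^2 - 4 = (w*h)^2] (mod int p)"
        using cancel_cong[OF p(1) nd(3) cong_trans[OF a1 cong_sym[OF a2]]] .
      have e2: "4*((3*h)^2 + 4) = 9*(2*h)^2 + 16" by (simp add: algebra_simps power2_eq_square)
      have "[9*(2*h)^2 + 16 = 9*1 + 16] (mod int p)" using H by (intro cong_add cong_mult) auto
      then have b1: "[4*((3*h)^2 + 4) = 25] (mod int p)" unfolding e2 by simp
      have "[25*(2*h)^2 = 25*1] (mod int p)" using H by (intro cong_mult) auto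
      then have b2: "[4*(5*h)^2 = 25] (mod int p)" by (simp add: power_mult_distrib algebra_simps)
      have z: "[(3*h)^2 + 4 = (5*h)^2] (mod int p)"
        using cancel_cong[OF p(1) nd(3) cong_trans[OF b1 cong_sym[OF b2]]] .
      have "\<not> int p dvd -7" using nd by simp
      then have ny: "\<not> int p dvd w*h" using sq_nz[OF p(1) a2] by blast
      have nz: "\<not> int p dvd 5*h" using sq_nz[OF p(1) b2] nd by blast
      show ?thesis using missing_nonres[OF p(1) n5 y z ny nz] .
    next
      case nm7: False
      show ?thesis
      proof (cases "QuadRes (int p) 7")
        case True
        then obtain w where w: "[w^2 = 7] (mod int p)" unfolding QuadRes_def by blast
        have "coprime 3 (int p)" using nd(2) p prime_imp_coprime[of "int p" 3] by (simp add: coprime_commute)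
        then obtain k where k: "[3*k = 1] (mod int p)" using cong_solve_coprime_int by blast
        have K: "[(3*k)^2 = 1] (mod int p)" using k cong_pow[of _ 1 _ 2] by fastforce
        have e1: "9*((8*k)^2 - 4) = 64*(3*k)^2 - 36" by (simp add: algebra_simps power2_eq_square)
        have "[64*(3*k)^2 - 36 = 64*1 - 36] (mod int p)" using K by (intro cong_diff cong_mult) auto
        then have a1: "[9*((8*k)^2 - 4) = 28] (mod int p)" unfolding e1 by simp
        have "[4*w^2*(3*k)^2 = 4*7*1] (mod int p)" using K w by (intro cong_mult) auto
        then have a2: "[9*(2*w*k)^2 = 28] (mod int p)" by (simp add: power_mult_distrib algebra_simps)
        have y: "[(8*k)^2 - 4 = (2*w*k)^2] (mod int p)"
          using cancel_cong[OF p(1) nd(6) cong_trans[OF a1 cong_sym[OF a2]]] .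
        have e2: "9*((8*k)^2 + 4) = 64*(3*k)^2 + 36" by (simp add: algebra_simps power2_eq_square)
        have "[64*(3*k)^2 + 36 = 64*1 + 36] (mod int p)" using K by (intro cong_add cong_mult) auto
        then have b1: "[9*((8*k)^2 + 4) = 100] (mod int p)" unfolding e2 by simp
        have "[100*(3*k)^2 = 100*1] (mod int p)" using K by (intro cong_mult) auto
        then have b2: "[9*(10*k)^2 = 100] (mod int p)" by (simp add: power_mult_distrib algebra_simps)
        have z: "[(8*k)^2 + 4 = (10*k)^2] (mod int p)"
          using cancel_cong[OF p(1) nd(6) cong_trans[OF b1 cong_sym[OF b2]]] .
        have ny: "\<not> int p dvd 2*w*k" using sq_nz[OF p(1) a2] nd by blast
        have nz: "\<not> int p dvd 10*k" using sq_nz[OF p(1) b2] nd by blast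
        show ?thesis using missing_nonres[OF p(1) n5 y z ny nz] .
      next
        case nr7: False
        define e where "e = (p - 1) div 2"
        have L: "Legendre x (int p) = -1" if "\<not> QuadRes (int p) x" "\<not> int p dvd x" for x
          using that unfolding Legendre_def by (simp add: cong_0_iff)
        have c1: "[(-1)^e = -1] (mod int p)"
          using euler_criterion[OF p(1) p2, of "-1"] L[OF nm1] nd p2 unfolding e_def
          by (simp add: cong_sym_eq)
        have "\<not> int p dvd -7" using nd by simp
        then have c2: "[(-7)^e = -1] (mod int p)"
          using euler_criterion[OF p(1) p2, of "-7"] L[OF nm7] unfolding e_def
          by (simp add: cong_sym_eq)
        have c3: "[7^e = -1] (mod int p)"
          using euler_criterion[OF p(1) p2, of "7"] L[OF nr7] nd unfolding e_def
          by (simp add: cong_sym_eq)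
        have "[(-1)^e * 7^e = (-1)*(-1)] (mod int p)" using c1 c3 cong_mult by blast
        moreover have "(-1)^e * 7^e = (-7::int)^e" by (simp add: power_mult_distrib[symmetric])
        ultimately have "[(-7)^e = (1::int)] (mod int p)" by simp
        then have "[-1 = (1::int)] (mod int p)" using cong_trans[OF cong_sym[OF c2]] by blast
        then have "int p dvd 2" by (simp add: cong_iff_dvd_diff)
        then show ?thesis using nd by simp
      qed
    qed
  qed
qed



lemma res_defective:
  assumes p: "prime (p::nat)" "p \<notin> {2,3,5,7}" and q5: "QuadRes (int p) 5"
  shows "\<not> complete_mod lucas (int p)"
proof
  assume comp: "complete_mod lucas (int p)"
  note nd = small_ndvd[OF p]
  have p2: "p > 2" using p prime_ge_2_nat[of p] by auto
  have odd: "odd p" using p p2 prime_odd_nat by blast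
  define h where "h = (int p + 1) div 2"
  have H1: "[2*h = 1] (mod int p)" using two_inv[OF odd] unfolding h_def .
  have H: "[(2*h)^2 = 1] (mod int p)" using H1 cong_pow[of _ 1 _ 2] by fastforce
  obtain s where s: "[s^2 = 5] (mod int p)" using q5 unfolding QuadRes_def by blast
  define a where "a = (1+s)*h"
  define b where "b = (1-s)*h"
  have ab1: "[a + b = 1] (mod int p)" using H1 unfolding a_def b_def by (simp add: algebra_simps)
  have "[1 - s^2 = 1 - 5] (mod int p)" using s by (intro cong_diff) auto
  then have "[(1 - s^2)*h^2 = (-4)*h^2] (mod int p)" by (intro cong_mult) auto
  moreover have "(-4)*h^2 = -((2*h)^2)" by (simp add: power_mult_distrib)
  moreover have "[-((2*h)^2) = -1] (mod int p)" using H by (simp add: cong_minus_minus_iff)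
  moreover have "a*b = (1 - s^2)*h^2" unfolding a_def b_def by (simp add: algebra_simps power2_eq_square)
  ultimately have ab2: "[a*b = -1] (mod int p)" by (metis cong_trans)
  have sq: "[x^2 = x + 1] (mod int p)" if "x = a \<or> x = b" for x
  proof -
    have "x^2 = x*(a+b) - a*b" using that by (auto simp: algebra_simps power2_eq_square)
    moreover have "[x*(a+b) - a*b = x*1 - (-1)] (mod int p)" using ab1 ab2 by (intro cong_diff cong_mult) auto
    ultimately show ?thesis by simp
  qed
  have luc: "[lucas n = a^n + b^n] (mod int p)" for n
  proof (induction n rule: lucas.induct)
    case 1 then show ?case by simp
  next
    case 2 then show ?case using ab1 by (simp add: cong_sym_eq)
  next
    case (3 n)
    have "[lucas (Suc (Suc n)) = (a^n + b^n) + (a^(Suc n) + b^(Suc n))] (mod int p)"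
      using 3 by (simp add: cong_add)
    moreover have "[a^n*a^2 + b^n*b^2 = a^n*(a+1) + b^n*(b+1)] (mod int p)"
      using sq by (intro cong_add cong_mult) auto
    moreover have "a^(Suc (Suc n)) + b^(Suc (Suc n)) = a^n*a^2 + b^n*b^2" by (simp add: power2_eq_square algebra_simps)
    moreover have "a^n*(a+1) + b^n*(b+1) = (a^n + b^n) + (a^(Suc n) + b^(Suc n))" by (simp add: algebra_simps)
    ultimately show ?case by (metis cong_sym cong_trans)
  qed
  have na: "\<not> int p dvd a" and nb: "\<not> int p dvd b"
  proof -
    have "\<not> int p dvd a*b"
    proof
      assume "int p dvd a*b"
      then have "int p dvd -1" using ab2 by (metis cong_dvd_iff)
      then show False using p2 by simp
    qed
    then show "\<not> int p dvd a" "\<not> int p dvd b" by auto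
  qed
  have fa: "[a^(p-1) = 1] (mod int p)" using fermat_int[OF p(1) p2 na] .
  have fb: "[b^(p-1) = 1] (mod int p)" using fermat_int[OF p(1) p2 nb] .
  have per: "[lucas (n + (p-1)) = lucas n] (mod int p)" for n
  proof -
    have "[lucas (n + (p-1)) = a^n*a^(p-1) + b^n*b^(p-1)] (mod int p)" using luc[of "n+(p-1)"] by (simp add: power_add)
    moreover have "[a^n*a^(p-1) + b^n*b^(p-1) = a^n*1 + b^n*1] (mod int p)" using fa fb by (intro cong_add cong_mult) auto
    ultimately show ?thesis using luc[of n] by (metis cong_sym cong_trans mult.right_neutral)
  qed
  have red: "\<exists>k\<in>{1..p-1}. [lucas n = lucas k] (mod int p)" if "n \<ge> 1" for n
    using that
  proof (induction n rule: less_induct)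
    case (less n)
    show ?case
    proof (cases "n \<le> p - 1")
      case True then show ?thesis using less.prems by (intro bexI[of _ n]) auto
    next
      case False
      define n' where "n' = n - (p-1)"
      have "n' \<ge> 1" "n' < n" using False p2 unfolding n'_def by auto
      then obtain k where "k \<in> {1..p-1}" "[lucas n' = lucas k] (mod int p)" using less.IH by blast
      moreover have "n = n' + (p-1)" using False unfolding n'_def by auto
      ultimately show ?thesis using per[of n'] by (metis cong_trans)
    qed
  qed
  define S where "S = (\<lambda>k. lucas k mod int p) ` {1..p-1}"
  have "card S \<le> p - 1" unfolding S_def using card_image_le[of "{1..p-1}"] by simp
  moreover have "card {0..<int p} = p" by simp
  ultimately have "\<not> {0..<int p} \<subseteq> S" using p2 card_mono[of S "{0..<int p}"] unfolding S_def by fastforce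
  then obtain r where r0: "r \<in> {0..<int p}" "r \<notin> S" by blast
  then have r: "0 \<le> r" "r < int p" "r \<notin> S" by auto
  obtain n where n: "n \<ge> 1" "[lucas n = r] (mod int p)" using comp unfolding complete_mod_def by blast
  obtain k where k: "k \<in> {1..p-1}" "[lucas n = lucas k] (mod int p)" using red[OF n(1)] by blast
  have "lucas k mod int p = r" using n(2) k(2) r(1,2) unfolding cong_def by simp
  then have "r \<in> S" unfolding S_def using k(1) by force
  then show False using r(3) by simp
qed

lemma prime_defective:
  assumes "prime (p::nat)" "p \<notin> {2,3,5,7}"
  shows "\<not> complete_mod lucas (int p)"
  using res_defective[OF assms] nonres_defective[OF assms] by blast



lemma compl_dvd: "complete_mod a m \<Longrightarrow> d dvd m \<Longrightarrow> complete_mod a d"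
  unfolding complete_mod_def using cong_dvd_modulus by blast

lemma bad5: "\<not> complete_mod lucas 5" by (rule defective_check[where r=0 and P=4]) code_simp+
lemma bad8: "\<not> complete_mod lucas 8" by (rule defective_check[where r=0 and P=12]) code_simp+
lemma bad12: "\<not> complete_mod lucas 12" by (rule defective_check[where r=0 and P=24]) code_simp+
lemma bad18: "\<not> complete_mod lucas 18" by (rule defective_check[where r=5 and P=24]) code_simp+
lemma bad21: "\<not> complete_mod lucas 21" by (rule defective_check[where r=0 and P=16]) code_simp+
lemma bad28: "\<not> complete_mod lucas 28" by (rule defective_check[where r=0 and P=48]) code_simp+
lemma bad49: "\<not> complete_mod lucas 49" by (rule defective_check[where r=5 and P=112]) code_simp+
lemma good4: "complete_mod lucas 4" by (rule complete_check[where P=6]) code_simp+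
lemma good6: "complete_mod lucas 6" by (rule complete_check[where P=24]) code_simp+
lemma good14: "complete_mod lucas 14" by (rule complete_check[where P=48]) code_simp+

lemma good3: "j \<ge> 1 \<Longrightarrow> complete_mod lucas (3^j)"
  unfolding complete_mod_def
proof
  fix r :: int
  assume "j \<ge> 1"
  then obtain n where "\<not> 4 dvd n" "[lucas n = r] (mod 3^j)" using complete3 by blast
  moreover then have "n \<ge> 1" by (cases n) auto
  ultimately show "\<exists>n\<ge>1. [lucas n = r] (mod 3^j)" by blast
qed

lemma necessary:
  fixes n :: nat
  assumes "complete_mod lucas (int n)" "n \<ge> 1"
  shows "n \<in> {1,2,4,6,7,14} \<or> (\<exists>j. n = 3^j)"
  using assms
proof (induction n rule: less_induct)
  case (less n)
  show ?case
  proof (cases "n = 1")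
    case True then show ?thesis by simp
  next
    case False
    then have "n \<ge> 2" using less.prems by simp
    then obtain p where p: "prime p" "p dvd n" using prime_factor_nat[of n] by auto
    then obtain m' where m': "n = p*m'" by (auto simp: dvd_def)
    have cd: "complete_mod lucas d" if "d dvd int n" for d using compl_dvd[OF less.prems(1) that] .
    have "p \<in> {2,3,5,7}"
    proof (rule ccontr)
      assume "p \<notin> {2,3,5,7}"
      then show False using prime_defective[OF p(1)] cd p(2) by (simp add: int_dvd_int_iff)
    qed
    moreover have "p \<noteq> 5" using cd[of 5] bad5 p(2) m' by (auto simp: int_dvd_int_iff)
    ultimately have pc: "p = 2 \<or> p = 3 \<or> p = 7" by auto
    have m1: "m' \<ge> 1" using m' \<open>n \<ge> 2\<close> by (cases m') auto
    have "2*m' \<le> p*m'" using prime_ge_2_nat[OF p(1)] by simp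
    then have "m' < n" using m1 m' by simp
    moreover note m1
    moreover have "complete_mod lucas (int m')" using cd[of "int m'"] m' by simp
    ultimately have IH: "m' \<in> {1,2,4,6,7,14} \<or> (\<exists>j. m' = 3^j)" using less.IH by blast
    have nb: "\<not> (int d dvd int n)" if "d \<in> {8,12,18,21,28,49}" for d :: nat
    proof
      assume "int d dvd int n"
      then have "complete_mod lucas (int d)" by (rule cd)
      then show False using that bad8 bad12 bad18 bad21 bad28 bad49 by (elim insertE) auto
    qed
    show ?thesis
    proof (cases "m' \<in> {1,2,4,6,7,14}")
      case True
      then have "m' = 1 \<or> m' = 2 \<or> m' = 4 \<or> m' = 6 \<or> m' = 7 \<or> m' = 14" by simp
      then have "n \<in> {2,4,8,12,14,28,3,6,18,21,42,7,49,98}" using pc unfolding m' by (elim disjE) simp_all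
      moreover have "n \<noteq> 8" using nb[of 8] by auto
      moreover have "n \<noteq> 12" using nb[of 12] by auto
      moreover have "n \<noteq> 18" using nb[of 18] by auto
      moreover have "n \<noteq> 21" using nb[of 21] by auto
      moreover have "n \<noteq> 28" using nb[of 28] by auto
      moreover have "n \<noteq> 49" using nb[of 49] by auto
      moreover have "n \<noteq> 42" using nb[of 21] by auto
      moreover have "n \<noteq> 98" using nb[of 49] by auto
      ultimately have "n \<in> {2,4,14,3,6,7}" by simp
      moreover have "(3::nat) = 3^1" by simp
      ultimately show ?thesis by blast
    next
      case False
      then obtain j where j: "m' = 3^j" using IH by blast
      consider "p = 3" | "p = 2" | "p = 7" using pc by blast
      then show ?thesis
      proof cases
        case 1 then show ?thesis using m' j by (intro disjI2 exI[of _ "Suc j"]) simp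
      next
        case 2
        show ?thesis
        proof (cases "j \<ge> 2")
          case True
          then obtain k where k: "j = k+2" by (metis le_add_diff_inverse2)
          then have "n = 18 * 3^k" using m' j 2 by (simp add: power_add)
          then have "int 18 dvd int n" by simp
          then show ?thesis using nb[of 18] by simp
        next
          case False
          then have "j = 0 \<or> j = 1" by auto
          then show ?thesis using m' j 2 by auto
        qed
      next
        case 3
        show ?thesis
        proof (cases "j \<ge> 1")
          case True
          then have "n = 21 * 3^(j-1)" using m' j 3 by (cases j) auto
          then have "int 21 dvd int n" by simp
          then show ?thesis using nb[of 21] by simp
        next
          case False
          then show ?thesis using m' j 3 by auto
        qed
      qed
    qed
  qed
qed

theorem mainTheorem6:
  fixes m :: int
  assumes "m \<ge> 2"
  shows "complete_mod lucas m \<longleftrightarrow>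
           (m \<in> {2, 4, 6, 7, 14} \<or> (\<exists>j::nat. j \<ge> 1 \<and> m = 3 ^ j))"
proof
  assume c: "complete_mod lucas m"
  define n where "n = nat m"
  have mn: "m = int n" using assms unfolding n_def by simp
  have "n \<in> {1,2,4,6,7,14} \<or> (\<exists>j. n = 3^j)" using necessary[of n] c mn assms by simp
  then show "m \<in> {2, 4, 6, 7, 14} \<or> (\<exists>j::nat. j \<ge> 1 \<and> m = 3 ^ j)"
  proof
    assume "n \<in> {1,2,4,6,7,14}"
    then show ?thesis using mn assms by auto
  next
    assume "\<exists>j. n = 3^j"
    then obtain j where j: "n = 3^j" by blast
    have "j \<ge> 1" using j mn assms by (cases j) auto
    then show ?thesis using j mn by auto
  qed
next
  assume "m \<in> {2, 4, 6, 7, 14} \<or> (\<exists>j::nat. j \<ge> 1 \<and> m = 3 ^ j)"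
  then show "complete_mod lucas m"
  proof
    assume "m \<in> {2, 4, 6, 7, 14}"
    moreover have "complete_mod lucas 2" "complete_mod lucas 7"
      using compl_dvd[OF good14] by auto
    ultimately show ?thesis using good4 good6 good14 by auto
  next
    assume "\<exists>j::nat. j \<ge> 1 \<and> m = 3 ^ j"
    then show ?thesis using good3 by auto
  qed
qed

end
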